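(* Let $Q\subseteq\mathbb{R}^n$ be a convex set, $f:Q\to\mathbb{R}$ a convex function, and consider the problem $\min_{x\in Q}f(x)$ with a solution $x_*$. Let $\|\cdot\|$ be a norm on $\mathbb{R}^n$, let $d$ be a differentiable function that is $1$-strongly convex with respect to $\|\cdot\|$, and let $V(x,y)=d(x)-d(y)-\langle\nabla d(y),x-y\rangle$ be the associated Bregman divergence. Let $L>0$, $\delta\ge0$, $\tilde\delta\ge0$, and suppose that at every point $x\in Q$ we are given a $(\delta,L)$-model $(f_\delta(x);\psi_\delta(\cdot,x))$ of $f$, i.e. $\psi_\delta(\cdot,x)$ is convex on $Q$, $\psi_\delta(x,x)=0$, and for all $y\in Q$ $$0\le f(y)-\bigl(f_\delta(x)+\psi_\delta(y,x)\bigr)\le\frac{L}{2}\|y-x\|^2+\delta.$$ Starting from $x^0\in Q$, let the points $x^{k+1}\in Q$, $k=0,1,\dots$, be inexact minimizers of $\Psi(x,x^k):=\psi_\delta(x,x^k)+L\,V(x,x^k)$ over $x\in Q$ in the following sense: there exists a subgradient $g^{k+1}\in\partial_x\Psi(x,x^k)\big|_{x=x^{k+1}}$ with $$\langle g^{k+1},x^{k+1}-x_*\rangle\le\tilde\delta.$$ Let $R^2=V(x_*,x^0)$ and $\bar x^N=\frac{1}{N}\sum_{k=1}^N x^k$. Then for every $N\ge1$ $$f(\bar x^N)-f(x_* )\le\frac{LR^2}{N}+\tilde\delta+2\delta,$$ and moreover $V(x_*,x^m)\le V(x_*,x^0)$ for every $m\ge1$ such that $f(\bar x^m)-f(x_*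 )\ge\tilde\delta+2\delta$.
   Context: If the solution $x_*$ is not unique, the estimates hold in particular for the solution $x_*$ minimizing $R^2=V(x_*,x^0)$ (the inexactness condition being understood with this $x_*$). *)

theory Defs
  imports "HOL-Analysis.Analysis"
begin

definition is_norm :: "('a::real_vector \<Rightarrow> real) \<Rightarrow> bool" where
  "is_norm nrm \<longleftrightarrow>
     (\<forall>x. nrm x = 0 \<longleftrightarrow> x = 0) \<and>
     (\<forall>x y. nrm (x + y) \<le> nrm x + nrm y) \<and>
     (\<forall>c x. nrm (c *\<^sub>R x) = \<bar>c\<bar> * nrm x)"

definition strongly_convex_wrt :: "('a::real_vector \<Rightarrow> real) \<Rightarrow> real \<Rightarrow> ('a \<Rightarrow> real) \<Rightarrow> 'a set \<Rightarrow> bool" where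
  "strongly_convex_wrt nrm \<mu> d Q \<longleftrightarrow>
     (\<forall>x\<in>Q. \<forall>y\<in>Q. \<forall>t::real. 0 \<le> t \<and> t \<le> 1 \<longrightarrow>
        d (t *\<^sub>R x + (1 - t) *\<^sub>R y)
          \<le> t * d x + (1 - t) * d y - \<mu> / 2 * t * (1 - t) * (nrm (x - y))\<^sup>2)"

text \<open>Bregman divergence \<open>V(x,y) = d(x) - d(y) - \<langle>\<nabla>d(y), x - y\<rangle>\<close>; the term
  \<open>\<langle>\<nabla>d(y), x - y\<rangle>\<close> is the Frechet derivative of \<open>d\<close> at \<open>y\<close> applied to \<open>x - y\<close>.\<close>
definition bregman :: "('a::real_normed_vector \<Rightarrow> real) \<Rightarrow> 'a \<Rightarrow> 'a \<Rightarrow> real" where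
  "bregman d x y = d x - d y - frechet_derivative d (at y) (x - y)"

definition subgradient_on :: "('a::real_inner \<Rightarrow> real) \<Rightarrow> 'a set \<Rightarrow> 'a \<Rightarrow> 'a \<Rightarrow> bool" where
  "subgradient_on h Q x g \<longleftrightarrow> x \<in> Q \<and> (\<forall>y\<in>Q. h y \<ge> h x + g \<bullet> (y - x))"

definition is_model :: "('a::real_vector \<Rightarrow> real) \<Rightarrow> 'a set \<Rightarrow> ('a \<Rightarrow> real) \<Rightarrow> real \<Rightarrow> real
     \<Rightarrow> ('a \<Rightarrow> real) \<Rightarrow> ('a \<Rightarrow> 'a \<Rightarrow> real) \<Rightarrow> bool" where
  "is_model nrm Q f \<delta> L f\<delta> psi \<longleftrightarrow>
     (\<forall>x\<in>Q. convex_on Q (\<lambda>y. psi y x) \<and> psi x x = 0 \<and>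
        (\<forall>y\<in>Q. 0 \<le> f y - (f\<delta> x + psi y x) \<and>
                f y - (f\<delta> x + psi y x) \<le> L / 2 * (nrm (y - x))\<^sup>2 + \<delta>))"

end

theory Submission
  imports Defs
begin

lemma dir_tendsto:
  fixes d :: "'a::real_normed_vector \<Rightarrow> real"
  assumes "d differentiable (at z)"
  shows "((\<lambda>t. (d (z + t *\<^sub>R v) - d z) / t) \<longlongrightarrow> frechet_derivative d (at z) v) (at_right 0)"
proof -
  let ?D = "frechet_derivative d (at z)"
  have D: "(d has_derivative ?D) (at z)" using assms frechet_derivative_works by blast
  have lin: "linear ?D" using D has_derivative_linear by blast
  have "((\<lambda>t::real. z + t *\<^sub>R v) has_derivative (\<lambda>t. t *\<^sub>R v)) (at 0)"
    by (auto intro!: derivative_eq_intros)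
  moreover have "(d has_derivative ?D) (at ((\<lambda>t::real. z + t *\<^sub>R v) 0))" using D by simp
  ultimately have "((\<lambda>t. d (z + t *\<^sub>R v)) has_derivative (\<lambda>t. ?D (t *\<^sub>R v))) (at 0)"
    by (rule has_derivative_compose)
  moreover have "(\<lambda>t. ?D (t *\<^sub>R v)) = (*) (?D v)"
    using lin by (auto simp: linear_scale)
  ultimately have "((\<lambda>t. d (z + t *\<^sub>R v)) has_field_derivative ?D v) (at 0)"
    by (simp add: has_field_derivative_def)
  then have "((\<lambda>t. (d (z + t *\<^sub>R v) - d z) / t) \<longlongrightarrow> ?D v) (at 0)"
    by (simp add: has_field_derivative_iff)
  then show ?thesis by (rule tendsto_mono[OF at_le, rotated]) simp
qed

lemma dir_upper:
  fixes d :: "'a::real_normed_vector \<Rightarrow> real"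
  assumes "d differentiable (at z)"
    and "\<And>t. 0 < t \<Longrightarrow> t \<le> 1 \<Longrightarrow> (d (z + t *\<^sub>R v) - d z) / t \<le> c + K * t"
  shows "frechet_derivative d (at z) v \<le> c"
proof -
  have "((\<lambda>t. c + K * t) \<longlongrightarrow> c + K * 0) (at_right (0::real))"
    by (intro tendsto_intros)
  then have l: "((\<lambda>t. c + K * t) \<longlongrightarrow> c) (at_right (0::real))" by simp
  have ev: "eventually (\<lambda>t. 0 < t \<and> t \<le> 1) (at_right (0::real))"
    unfolding eventually_at_right_field by (rule exI[of _ 1]) auto
  show ?thesis
    by (rule tendsto_le[OF _ l dir_tendsto[OF assms(1)]])
       (auto intro: eventually_mono[OF ev] assms(2))
qed

lemma dir_lower:
  fixes d :: "'a::real_normed_vector \<Rightarrow> real"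
  assumes "d differentiable (at z)"
    and "\<And>t. 0 < t \<Longrightarrow> t \<le> 1 \<Longrightarrow> c \<le> (d (z + t *\<^sub>R v) - d z) / t"
  shows "c \<le> frechet_derivative d (at z) v"
proof -
  have ev: "eventually (\<lambda>t. 0 < t \<and> t \<le> 1) (at_right (0::real))"
    unfolding eventually_at_right_field by (rule exI[of _ 1]) auto
  show ?thesis
    by (rule tendsto_le[OF _ dir_tendsto[OF assms(1)] tendsto_const])
       (auto intro: eventually_mono[OF ev] assms(2))
qed

lemma breg_lower:
  fixes d :: "'a::real_normed_vector \<Rightarrow> real"
  assumes sc: "strongly_convex_wrt nrm 1 d Q" and yQ: "y \<in> Q" and zQ: "z \<in> Q"
    and dz: "d differentiable (at z)"
  shows "(nrm (y - z))\<^sup>2 / 2 \<le> bregman d y z"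
proof -
  let ?n = "(nrm (y - z))\<^sup>2"
  have "frechet_derivative d (at z) (y - z) \<le> (d y - d z - ?n / 2)"
  proof (rule dir_upper[OF dz, where K = "?n / 2"])
    fix t :: real assume t: "0 < t" "t \<le> 1"
    have e: "z + t *\<^sub>R (y - z) = t *\<^sub>R y + (1 - t) *\<^sub>R z"
      by (simp add: algebra_simps)
    have "d (t *\<^sub>R y + (1 - t) *\<^sub>R z) \<le> t * d y + (1 - t) * d z - 1 / 2 * t * (1 - t) * ?n"
      using sc yQ zQ t unfolding strongly_convex_wrt_def by auto
    then have h: "d (z + t *\<^sub>R (y - z)) \<le> t * d y + (1 - t) * d z - 1 / 2 * t * (1 - t) * ?n"
      by (simp only: e)
    have "\<And>a::real. a \<le> t * d y + (1 - t) * d z - 1 / 2 * t * (1 - t) * ?n \<Longrightarrow>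
        a - d z \<le> t * ((d y - d z - ?n / 2) + ?n / 2 * t)"
      by (simp add: algebra_simps diff_divide_distrib)
    from this[OF h] have "d (z + t *\<^sub>R (y - z)) - d z \<le> t * ((d y - d z - ?n / 2) + ?n / 2 * t)" .
    then show "(d (z + t *\<^sub>R (y - z)) - d z) / t \<le> d y - d z - ?n / 2 + ?n / 2 * t"
      using t by (simp add: pos_divide_le_eq mult.commute)
  qed
  then show ?thesis unfolding bregman_def by simp
qed

lemma key:
  fixes d :: "'a::real_inner \<Rightarrow> real"
  assumes cQ: "convex Q" and yQ: "y \<in> Q" and wQ: "w \<in> Q"
    and dd: "\<forall>u\<in>Q. d differentiable (at u)"
    and pc: "convex_on Q (\<lambda>u. psi u w)" and L: "L > 0"
    and sg: "subgradient_on (\<lambda>u. psi u w + L * bregman d u w) Q z g"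
  shows "psi z w + L * bregman d z w + L * bregman d y z + g \<bullet> (y - z) \<le> psi y w + L * bregman d y w"
proof -
  have zQ: "z \<in> Q" using sg unfolding subgradient_on_def by auto
  let ?A = "psi y w + L * bregman d y w - psi z w - L * bregman d z w - g \<bullet> (y - z)"
  let ?Dw = "frechet_derivative d (at w)"
  have lin: "linear ?Dw" using dd wQ frechet_derivative_works has_derivative_linear by blast
  have "d y - d z - ?A / L \<le> frechet_derivative d (at z) (y - z)"
  proof (rule dir_lower)
    show "d differentiable (at z)" using dd zQ by auto
    fix t :: real assume t: "0 < t" "t \<le> 1"
    define yt where "yt = z + t *\<^sub>R (y - z)"
    have e: "yt = (1 - t) *\<^sub>R z + t *\<^sub>R y" unfolding yt_def by (simp add: algebra_simps)
    have ytQ: "yt \<in> Q" unfolding e using cQ yQ zQ t by (simp add: convex_def)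
    have s: "psi yt w + L * bregman d yt w \<ge> psi z w + L * bregman d z w + g \<bullet> (yt - z)"
      using sg ytQ unfolding subgradient_on_def by auto
    have gs: "g \<bullet> (yt - z) = t * (g \<bullet> (y - z))" unfolding yt_def by simp
    have cv: "psi yt w \<le> (1 - t) * psi z w + t * psi y w"
      unfolding e using convex_onD[OF pc] t zQ yQ by auto
    have e2: "yt - w = (1 - t) *\<^sub>R (z - w) + t *\<^sub>R (y - w)" unfolding e by (simp add: algebra_simps)
    have dl: "?Dw (yt - w) = (1 - t) * ?Dw (z - w) + t * ?Dw (y - w)"
      unfolding e2 using lin by (simp add: linear_add linear_scale)
    have bv: "bregman d yt w = d yt - (1 - t) * (d z - bregman d z w) - t * (d y - bregman d y w)"
      unfolding bregman_def dl by (simp add: algebra_simps)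
    have "L * (d yt - d z) \<ge> t * (L * (d y - d z) - ?A)"
      using s gs cv bv by (simp add: algebra_simps)
    then have "t * (d y - d z - ?A / L) \<le> d yt - d z"
      using L by (simp add: field_simps)
    then show "d y - d z - ?A / L \<le> (d (z + t *\<^sub>R (y - z)) - d z) / t"
      using t unfolding yt_def by (simp add: pos_le_divide_eq mult.commute)
  qed
  then have "L * bregman d y z \<le> ?A"
    using L unfolding bregman_def by (simp add: field_simps)
  then show ?thesis by simp
qed

theorem theorem3p1:
  fixes Q :: "(real ^ 'n) set" and f :: "real ^ 'n \<Rightarrow> real"
    and nrm :: "real ^ 'n \<Rightarrow> real" and d :: "real ^ 'n \<Rightarrow> real"
    and L \<delta> \<delta>t :: real
    and f\<delta> :: "real ^ 'n \<Rightarrow> real" and psi :: "real ^ 'n \<Rightarrow> real ^ 'n \<Rightarrow> real"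
    and xs :: "real ^ 'n" and x :: "nat \<Rightarrow> real ^ 'n" and g :: "nat \<Rightarrow> real ^ 'n"
  assumes Q_convex: "convex Q"
    and f_convex: "convex_on Q f"
    and xs_sol: "xs \<in> Q" "\<forall>y\<in>Q. f xs \<le> f y"
    and nrm: "is_norm nrm"
    and d_diff: "\<forall>y\<in>Q. d differentiable (at y)"
    and d_sc: "strongly_convex_wrt nrm 1 d Q"
    and L_pos: "L > 0" and \<delta>_nn: "\<delta> \<ge> 0" and \<delta>t_nn: "\<delta>t \<ge> 0"
    and model: "is_model nrm Q f \<delta> L f\<delta> psi"
    and x_in: "\<forall>k. x k \<in> Q"
    and g_sub: "\<forall>k. subgradient_on (\<lambda>y. psi y (x k) + L * bregman d y (x k)) Q (x (Suc k)) (g (Suc k))"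
    and inexact: "\<forall>k. g (Suc k) \<bullet> (x (Suc k) - xs) \<le> \<delta>t"
  shows "(\<forall>N::nat. N \<ge> 1 \<longrightarrow>
            f ((1 / real N) *\<^sub>R (\<Sum>k=1..N. x k)) - f xs
              \<le> L * bregman d xs (x 0) / real N + \<delta>t + 2 * \<delta>)
       \<and> (\<forall>m::nat. m \<ge> 1 \<longrightarrow>
            f ((1 / real m) *\<^sub>R (\<Sum>k=1..m. x k)) - f xs \<ge> \<delta>t + 2 * \<delta> \<longrightarrow>
            bregman d xs (x m) \<le> bregman d xs (x 0))"
proof -
  define V where "V k = bregman d xs (x k)" for k
  have model': "\<And>w y. w \<in> Q \<Longrightarrow> y \<in> Q \<Longrightarrow> convex_on Q (\<lambda>y. psi y w) \<and>
      0 \<le> f y - (f\<delta> w + psi y w) \<and> f y - (f\<delta> w + psi y w) \<le> L / 2 * (nrm (y - w))\<^sup>2 + \<delta>"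
    using model unfolding is_model_def by blast
  have Vnn: "V k \<ge> 0" for k
  proof -
    have "(nrm (xs - x k))\<^sup>2 / 2 \<le> V k" unfolding V_def
      using breg_lower[OF d_sc xs_sol(1) x_in[rule_format] d_diff[rule_format, OF x_in[rule_format]]] .
    moreover have "(nrm (xs - x k))\<^sup>2 / 2 \<ge> 0" by simp
    ultimately show ?thesis by linarith
  qed
  have step: "f (x (Suc k)) - f xs \<le> L * (V k - V (Suc k)) + \<delta>t + \<delta>" for k
  proof -
    let ?w = "x k" and ?z = "x (Suc k)"
    have wQ: "?w \<in> Q" and zQ: "?z \<in> Q" using x_in by auto
    have K: "psi ?z ?w + L * bregman d ?z ?w + L * bregman d xs ?z + g (Suc k) \<bullet> (xs - ?z)
        \<le> psi xs ?w + L * bregman d xs ?w"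
    proof (rule key[OF Q_convex xs_sol(1) wQ d_diff _ L_pos])
      show "convex_on Q (\<lambda>u. psi u (x k))" using model'[OF wQ wQ] by blast
      show "subgradient_on (\<lambda>u. psi u (x k) + L * bregman d u (x k)) Q (x (Suc k)) (g (Suc k))"
        using g_sub by blast
    qed
    have bz: "(nrm (?z - ?w))\<^sup>2 / 2 \<le> bregman d ?z ?w"
      using breg_lower[OF d_sc zQ wQ] d_diff wQ by blast
    have m1: "f ?z - (f\<delta> ?w + psi ?z ?w) \<le> L / 2 * (nrm (?z - ?w))\<^sup>2 + \<delta>"
      using model'[OF wQ zQ] by blast
    have m2: "0 \<le> f xs - (f\<delta> ?w + psi xs ?w)"
      using model'[OF wQ xs_sol(1)] by blast
    have "L / 2 * (nrm (?z - ?w))\<^sup>2 \<le> L * bregman d ?z ?w"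
      using bz L_pos by (simp add: field_simps)
    moreover have "g (Suc k) \<bullet> (xs - ?z) = - (g (Suc k) \<bullet> (?z - xs))"
      by (simp add: inner_diff_right)
    moreover have "g (Suc k) \<bullet> (?z - xs) \<le> \<delta>t" using inexact by blast
    ultimately show ?thesis using K m1 m2 unfolding V_def by (simp add: algebra_simps)
  qed
  have sumb: "(\<Sum>k=1..N. f (x k)) - real N * f xs \<le> L * (V 0 - V N) + real N * (\<delta>t + \<delta>)" for N
  proof (induction N)
    case 0 then show ?case by simp
  next
    case (Suc N)
    have "(\<Sum>k=1..Suc N. f (x k)) = (\<Sum>k=1..N. f (x k)) + f (x (Suc N))" by simp
    then show ?case using Suc step[of N] by (simp add: algebra_simps)
  qed
  have avg: "f ((1 / real N) *\<^sub>R (\<Sum>k=1..N. x k)) - f xs \<le> L * (V 0 - V N) / real N + \<delta>t + \<delta>"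
    if N: "N \<ge> 1" for N
  proof -
    have Np: "real N > 0" using N by simp
    have "f ((1 / real N) *\<^sub>R (\<Sum>k=1..N. x k)) = f (\<Sum>k=1..N. (1 / real N) *\<^sub>R x k)"
      by (simp add: scaleR_sum_right)
    also have "\<dots> \<le> (\<Sum>k=1..N. (1 / real N) * f (x k))"
      by (rule convex_on_sum[OF _ _ f_convex]) (use N x_in in auto)
    also have "\<dots> = (\<Sum>k=1..N. f (x k)) / real N"
      by (simp add: sum_divide_distrib)
    finally have a: "f ((1 / real N) *\<^sub>R (\<Sum>k=1..N. x k)) \<le> (\<Sum>k=1..N. f (x k)) / real N" .
    have "(\<Sum>k=1..N. f (x k)) / real N \<le> (L * (V 0 - V N) + real N * (\<delta>t + \<delta>) + real N * f xs) / real N"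
      using sumb[of N] Np by (intro divide_right_mono) auto
    also have "\<dots> = L * (V 0 - V N) / real N + \<delta>t + \<delta> + f xs"
      using Np by (simp add: field_simps)
    finally show ?thesis using a by linarith
  qed
  show ?thesis
  proof (intro conjI allI impI)
    fix N :: nat assume N: "N \<ge> 1"
    have "L * (V 0 - V N) / real N \<le> L * V 0 / real N"
      using Vnn[of N] L_pos by (intro divide_right_mono) auto
    then show "f ((1 / real N) *\<^sub>R (\<Sum>k=1..N. x k)) - f xs \<le> L * bregman d xs (x 0) / real N + \<delta>t + 2 * \<delta>"
      using avg[OF N] \<delta>_nn unfolding V_def by linarith
  next
    fix m :: nat assume m: "m \<ge> 1"
      and h: "f ((1 / real m) *\<^sub>R (\<Sum>k=1..m. x k)) - f xs \<ge> \<delta>t + 2 * \<delta>"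
    have "L * (V 0 - V m) / real m \<ge> \<delta>" using avg[OF m] h by linarith
    then have "L * (V 0 - V m) / real m \<ge> 0" using \<delta>_nn by linarith
    then have "L * (V 0 - V m) \<ge> 0" using m by (simp add: zero_le_divide_iff)
    then have "V 0 - V m \<ge> 0" using L_pos by (simp add: zero_le_mult_iff)
    then show "bregman d xs (x m) \<le> bregman d xs (x 0)" unfolding V_def by simp
  qed
qed

end
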